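(* For nonnegative integers $L,M,j$ let $$K(L,M,j)=\sum_{\substack{\ell_0,\dots,\ell_j\ge 0\\ \ell_0+\dots+\ell_j=L}}\ \sum_{\substack{m_0,\dots,m_j\ge 0\\ m_0+\dots+m_j=M}}\ \prod_{r=0}^{j}\binom{\ell_r+m_r}{\ell_r}^{2}.$$ Let $x,y\in[0,1/4)$ and $w\ge 0$ satisfy $w<\sqrt{(1-(x+y))^2-4xy}$ (positive square root). Then the series $\kappa(w,x,y)=\sum_{j,L,M\ge 0}w^{j}x^{L}y^{M}K(L,M,j)$ converges and $$\kappa(w,x,y)=\frac{1}{\sqrt{\big(1-(x+y)\big)^{2}-4xy}-w}.$$ *)

theory Defs
  imports "HOL-Analysis.Analysis"
begin

text \<open>Weak compositions of L into j+1 nonnegative parts (l_0,...,l_j), encoded as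
  functions nat => nat vanishing beyond index j.\<close>
definition wcomps :: "nat \<Rightarrow> nat \<Rightarrow> (nat \<Rightarrow> nat) set" where
  "wcomps L j = {l. (\<forall>r>j. l r = 0) \<and> (\<Sum>r\<le>j. l r) = L}"

definition K :: "nat \<Rightarrow> nat \<Rightarrow> nat \<Rightarrow> nat" where
  "K L M j = (\<Sum>l\<in>wcomps L j. \<Sum>m\<in>wcomps M j. \<Prod>r\<le>j. ((l r + m r) choose (l r))^2)"

end

theory Submission
  imports Defs
begin

definition cb :: "nat \<Rightarrow> nat \<Rightarrow> nat" where "cb L M = ((L+M) choose L)^2"

lemma wcomps_finite: "finite (wcomps L j)"
proof -
  have "wcomps L j \<subseteq> {l. \<forall>r. (r \<in> {..j} \<longrightarrow> l r \<in> {..L}) \<and> (r \<notin> {..j} \<longrightarrow> l r = 0)}"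
  proof
    fix l assume l: "l \<in> wcomps L j"
    have "l r \<le> L" if "r \<le> j" for r
      using l that member_le_sum[of r "{..j}" l] by (auto simp: wcomps_def)
    then show "l \<in> {l. \<forall>r. (r \<in> {..j} \<longrightarrow> l r \<in> {..L}) \<and> (r \<notin> {..j} \<longrightarrow> l r = 0)}"
      using l by (auto simp: wcomps_def)
  qed
  moreover have "finite {l. \<forall>r. (r \<in> {..j} \<longrightarrow> l r \<in> {..L}) \<and> (r \<notin> {..j} \<longrightarrow> l r = (0::nat))}"
    by (rule finite_set_of_finite_funs) auto
  ultimately show ?thesis by (rule finite_subset)
qed

lemma wcomps_0: "wcomps L 0 = {\<lambda>r. if r = 0 then L else 0}"
  by (auto simp: wcomps_def)

lemma K_0: "K L M 0 = cb L M"
  by (simp add: K_def wcomps_0 cb_def)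

lemma upd_in: assumes a: "L1 \<le> L" "l' \<in> wcomps L1 j"
  shows "l'(Suc j := L - L1) \<in> wcomps L (Suc j)"
proof -
    have "(\<Sum>r\<le>j. (l'(Suc j := L - L1)) r) = (\<Sum>r\<le>j. l' r)" by (intro sum.cong) auto
    have "(\<Sum>r\<le>Suc j. (l'(Suc j := L - L1)) r) = (\<Sum>r\<le>j. (l'(Suc j := L - L1)) r) + (L - L1)"
      by (simp add: sum.atMost_Suc)
    also have "\<dots> = L" using a by (simp add: wcomps_def)
    finally have "(\<Sum>r\<le>Suc j. (l'(Suc j := L - L1)) r) = L" .
    moreover have "\<forall>r>Suc j. (l'(Suc j := L - L1)) r = 0" using a by (auto simp: wcomps_def)
    ultimately show ?thesis
      by (simp add: wcomps_def)
qed

lemma wcomps_Suc_bij: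
  "bij_betw (\<lambda>(L1, l'). l'(Suc j := L - L1)) (Sigma {..L} (\<lambda>L1. wcomps L1 j)) (wcomps L (Suc j))"
proof (rule bij_betw_byWitness[where f' = "\<lambda>l. (L - l (Suc j), l(Suc j := 0))"])
  show "\<forall>a\<in>Sigma {..L} (\<lambda>L1. wcomps L1 j). (\<lambda>l. (L - l (Suc j), l(Suc j := 0))) ((\<lambda>(L1, l'). l'(Suc j := L - L1)) a) = a"
    by (auto simp: wcomps_def)
  show "\<forall>a'\<in>wcomps L (Suc j). (\<lambda>(L1, l'). l'(Suc j := L - L1)) ((\<lambda>l. (L - l (Suc j), l(Suc j := 0))) a') = a'"
  proof
    fix l assume l: "l \<in> wcomps L (Suc j)"
    have "l (Suc j) \<le> L" using l member_le_sum[of "Suc j" "{..Suc j}" l] by (auto simp: wcomps_def)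
    then show "(\<lambda>(L1, l'). l'(Suc j := L - L1)) ((\<lambda>l. (L - l (Suc j), l(Suc j := 0))) l) = l"
      by (simp add: fun_eq_iff)
  qed
  show "(\<lambda>(L1, l'). l'(Suc j := L - L1)) ` Sigma {..L} (\<lambda>L1. wcomps L1 j) \<subseteq> wcomps L (Suc j)"
    by (auto intro: upd_in)
  show "(\<lambda>l. (L - l (Suc j), l(Suc j := 0))) ` wcomps L (Suc j) \<subseteq> Sigma {..L} (\<lambda>L1. wcomps L1 j)"
  proof safe
    fix l assume l: "l \<in> wcomps L (Suc j)"
    then have s: "(\<Sum>r\<le>j. l r) + l (Suc j) = L" by (simp add: wcomps_def sum.atMost_Suc)
    show "L - l (Suc j) \<le> L" by simp
    have "(\<Sum>r\<le>j. (l(Suc j := 0)) r) = (\<Sum>r\<le>j. l r)" by (intro sum.cong) auto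
    then show "l(Suc j := 0) \<in> wcomps (L - l (Suc j)) j"
      using l s by (auto simp: wcomps_def)
  qed
qed

lemma K_Suc: "K L M (Suc j) = (\<Sum>L1\<le>L. \<Sum>M1\<le>M. K L1 M1 j * cb (L - L1) (M - M1))"
proof -
  define P where "P = (\<lambda>(l::nat\<Rightarrow>nat) m. \<Prod>r\<le>j. ((l r + m r) choose (l r))^2)"
  have step: "(\<Prod>r\<le>Suc j. (((l'(Suc j := a)) r + (m'(Suc j := b)) r) choose ((l'(Suc j := a)) r))^2)
      = P l' m' * cb a b" for l' m' a b
  proof -
    have "(\<Prod>r\<le>j. (((l'(Suc j := a)) r + (m'(Suc j := b)) r) choose ((l'(Suc j := a)) r))^2) = P l' m'"
      unfolding P_def by (intro prod.cong) auto
    then show ?thesis by (simp add: cb_def)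
  qed
  have "K L M (Suc j) = (\<Sum>(L1,l')\<in>Sigma {..L} (\<lambda>L1. wcomps L1 j). \<Sum>(M1,m')\<in>Sigma {..M} (\<lambda>M1. wcomps M1 j).
      P l' m' * cb (L - L1) (M - M1))"
    unfolding K_def
    apply (subst sum.reindex_bij_betw[OF wcomps_Suc_bij, symmetric])
    apply (subst sum.reindex_bij_betw[OF wcomps_Suc_bij, symmetric])
    apply (simp add: case_prod_unfold step P_def cb_def)
    done
  also have "\<dots> = (\<Sum>L1\<le>L. \<Sum>l'\<in>wcomps L1 j. \<Sum>M1\<le>M. \<Sum>m'\<in>wcomps M1 j. P l' m' * cb (L - L1) (M - M1))"
    by (simp add: sum.Sigma[symmetric] wcomps_finite)
  also have "\<dots> = (\<Sum>L1\<le>L. \<Sum>M1\<le>M. \<Sum>l'\<in>wcomps L1 j. \<Sum>m'\<in>wcomps M1 j. P l' m' * cb (L - L1) (M - M1))"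
    by (intro sum.cong refl sum.swap)
  also have "\<dots> = (\<Sum>L1\<le>L. \<Sum>M1\<le>M. K L1 M1 j * cb (L - L1) (M - M1))"
    by (simp add: K_def P_def sum_distrib_right)
  finally show ?thesis .
qed

lemma nn_fubini:
  fixes f :: "'a \<times> 'b \<Rightarrow> real"
  assumes f: "\<And>x. x \<in> A \<Longrightarrow> ((\<lambda>y. f (x,y)) has_sum g x) (B x)"
    and g: "(g has_sum S) A"
    and nn: "\<And>x y. x \<in> A \<Longrightarrow> y \<in> B x \<Longrightarrow> f (x,y) \<ge> 0"
  shows "(f has_sum S) (Sigma A B)"
  by (rule has_sum_SigmaI[OF f g summable_on_SigmaI[OF f has_sum_imp_summable[OF g] nn]])

lemma has_sum_prod_nn:
  fixes a :: "'a \<Rightarrow> real" and b :: "'b \<Rightarrow> real"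
  assumes "(a has_sum A) UNIV" "(b has_sum B) UNIV" "\<And>p. a p \<ge> 0" "\<And>q. b q \<ge> 0"
  shows "((\<lambda>(p,q). a p * b q) has_sum A * B) UNIV"
proof -
  have "((\<lambda>(p,q). a p * b q) has_sum A * B) (Sigma UNIV (\<lambda>_. UNIV))"
    by (rule nn_fubini[where g = "\<lambda>p. a p * B"])
       (auto intro!: has_sum_cmult_right has_sum_cmult_left assms mult_nonneg_nonneg)
  then show ?thesis by simp
qed

lemma conv2:
  fixes a b :: "nat \<Rightarrow> nat \<Rightarrow> real" and x y :: real
  assumes ha: "((\<lambda>(L,M). a L M * x^L * y^M) has_sum A) UNIV"
    and hb: "((\<lambda>(L,M). b L M * x^L * y^M) has_sum B) UNIV"
    and nn: "\<And>L M. a L M \<ge> 0" "\<And>L M. b L M \<ge> 0" "x \<ge> 0" "y \<ge> 0"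
  shows "((\<lambda>(L,M). (\<Sum>L1\<le>L. \<Sum>M1\<le>M. a L1 M1 * b (L-L1) (M-M1)) * x^L * y^M) has_sum A * B) UNIV"
proof -
  define a' where "a' = (\<lambda>(L,M). a L M * x^L * y^M)"
  define b' where "b' = (\<lambda>(L,M). b L M * x^L * y^M)"
  have P: "((\<lambda>(p,q). a' p * b' q) has_sum A * B) UNIV"
    using ha hb nn unfolding a'_def b'_def
    by (intro has_sum_prod_nn) (auto intro!: mult_nonneg_nonneg)
  define S where "S = Sigma (UNIV :: (nat\<times>nat) set) (\<lambda>(L,M). {..L} \<times> {..M})"
  have "((\<lambda>z. (\<lambda>(p,q). a' p * b' q) ((\<lambda>((L,M),(L1,M1)). ((L1,M1),(L-L1,M-M1))) z)) has_sum A * B) S"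
  proof (subst has_sum_reindex_bij_witness[where i = "\<lambda>((L1,M1),(L2,M2)). ((L1+L2,M1+M2),(L1,M1))"
        and j = "\<lambda>((L,M),(L1,M1)). ((L1,M1),(L-L1,M-M1))" and T = UNIV and s' = "A*B"
        and h = "\<lambda>(p,q). a' p * b' q"])
    show "((\<lambda>(p,q). a' p * b' q) has_sum A * B) UNIV" by (rule P)
  qed (auto simp: S_def)
  then have H: "((\<lambda>((L,M),(L1,M1)). a L1 M1 * b (L-L1) (M-M1) * x^L * y^M) has_sum A * B) S"
  proof (rule has_sum_cong[THEN iffD1, rotated])
    fix z assume "z \<in> S"
    then obtain L M L1 M1 where z: "z = ((L,M),(L1,M1))" "L1 \<le> L" "M1 \<le> M" by (auto simp: S_def)
    have "x^L = x^L1 * x^(L-L1)" using z by (simp flip: power_add)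
    moreover have "y^M = y^M1 * y^(M-M1)" using z by (simp flip: power_add)
    ultimately show "(\<lambda>z. (\<lambda>(p,q). a' p * b' q) ((\<lambda>((L,M),(L1,M1)). ((L1,M1),(L-L1,M-M1))) z)) z
        = (\<lambda>((L,M),(L1,M1)). a L1 M1 * b (L-L1) (M-M1) * x^L * y^M) z"
      using z by (simp add: a'_def b'_def mult_ac)
  qed
  have "((\<lambda>(L,M). \<Sum>(L1,M1)\<in>{..L}\<times>{..M}. a L1 M1 * b (L-L1) (M-M1) * x^L * y^M) has_sum A * B) UNIV"
    using has_sum_Sigma'[OF H[unfolded S_def]]
    by (auto simp: case_prod_unfold intro!: has_sum_finiteI)
  then show ?thesis
  proof (rule has_sum_cong[THEN iffD1, rotated])
    fix p :: "nat \<times> nat"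
    obtain L M where p: "p = (L,M)" by fastforce
    have "(\<Sum>(L1,M1)\<in>{..L}\<times>{..M}. a L1 M1 * b (L-L1) (M-M1) * x^L * y^M)
        = (\<Sum>L1\<le>L. \<Sum>M1\<le>M. a L1 M1 * b (L-L1) (M-M1) * x^L * y^M)"
      by (rule sum.cartesian_product[symmetric])
    then show "(\<lambda>(L,M). \<Sum>(L1,M1)\<in>{..L}\<times>{..M}. a L1 M1 * b (L-L1) (M-M1) * x^L * y^M) p =
       (\<lambda>(L,M). (\<Sum>L1\<le>L. \<Sum>M1\<le>M. a L1 M1 * b (L-L1) (M-M1)) * x^L * y^M) p"
      by (simp add: p sum_distrib_right)
  qed
qed

lemma fact_double: "(fact (2*k) :: real) = fact k * (\<Prod>i<k. 4 * real i + 2)"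
proof (induction k)
  case 0 then show ?case by simp
next
  case (Suc k)
  have e: "2 * Suc k = Suc (Suc (2*k))" by simp
  have "(fact (2 * Suc k) :: real) = (real (2*k) + 2) * ((real (2*k) + 1) * fact (2*k))"
    unfolding e fact_Suc by (simp add: algebra_simps)
  also have "\<dots> = (real k + 1) * fact k * ((\<Prod>i<k. 4 * real i + 2) * (4 * real k + 2))"
    unfolding Suc by (simp add: algebra_simps)
  also have "\<dots> = fact (Suc k) * (\<Prod>i<Suc k. 4 * real i + 2)"
    by (simp add: prod.lessThan_Suc)
  finally show ?case .
qed

lemma central_gchoose: "real ((2*k) choose k) = ((-1/2) gchoose k) * (-4)^k"
proof -
  define P where "P = (\<Prod>i<k. 4 * real i + 2)"
  have "((-1/2::real) gchoose k) * fact k = (\<Prod>i = 0..<k. -1/2 - real i)"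
    by (rule gbinomial_mult_fact')
  then have "((-1/2::real) gchoose k) * (-4)^k * fact k = (\<Prod>i<k. -1/2 - real i) * (\<Prod>i<k. (-4::real))"
    by (simp add: atLeast0LessThan mult_ac)
  also have "\<dots> = P" unfolding P_def prod.distrib[symmetric]
    by (intro prod.cong) (auto simp: algebra_simps)
  finally have 1: "((-1/2::real) gchoose k) * (-4)^k * fact k = P" .
  have "real ((2*k) choose k) = fact (2*k) / (fact k * fact k)"
    by (subst binomial_fact) auto
  also have "\<dots> = P / fact k" by (simp add: fact_double P_def)
  finally have "fact k * real ((2*k) choose k) = fact k * (((-1/2) gchoose k) * (-4)^k)"
    using 1 by (simp add: field_simps)
  then show ?thesis by simp
qed

lemma central_series:
  fixes t :: real assumes "0 \<le> t" "t < 1/4"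
  shows "((\<lambda>k. real ((2*k) choose k) * t^k) has_sum 1 / sqrt (1 - 4*t)) UNIV"
proof (rule sums_nonneg_imp_has_sum)
  have "\<bar>-4*t\<bar> < 1" using assms by auto
  from gen_binomial_real[OF this, of "-1/2"]
  have "(\<lambda>n. ((-1/2) gchoose n) * (-4*t)^n) sums (1 + -4*t) powr (-1/2)" .
  moreover have "((-1/2) gchoose n) * (-4*t)^n = real ((2*n) choose n) * t^n" for n
    by (subst power_mult_distrib) (simp add: central_gchoose)
  moreover have "(1 + -4*t) powr (-1/2) = 1 / sqrt (1 - 4*t)"
    using assms by (simp add: powr_minus_divide powr_half_sqrt)
  ultimately show "(\<lambda>k. real ((2*k) choose k) * t^k) sums (1 / sqrt (1 - 4*t))" by simp
qed (use assms in auto)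

lemma negbin_series:
  fixes s :: real assumes "0 \<le> s" "s < 1"
  shows "((\<lambda>n. real ((n+r) choose r) * s^n) has_sum 1 / (1 - s)^(r+1)) UNIV"
proof (rule sums_nonneg_imp_has_sum)
  have "\<bar>-s\<bar> < 1" using assms by auto
  from gen_binomial_real[OF this, of "-(real r + 1)"]
  have "(\<lambda>n. ((-(real r + 1)) gchoose n) * (-s)^n) sums (1 + -s) powr (-(real r + 1))" .
  moreover have "((-(real r + 1)) gchoose n) * (-s)^n = real ((n+r) choose r) * s^n" for n
  proof -
    have "((-(real r + 1)) gchoose n) = (-1)^n * ((real r + 1 + real n - 1) gchoose n)"
      by (rule gbinomial_minus)
    also have "(real r + 1 + real n - 1) = real (n + r)" by simp
    also have "(real (n+r) gchoose n) = real ((n+r) choose n)" by (simp add: binomial_gbinomial)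
    also have "(n+r) choose n = (n+r) choose r" by (metis add_diff_cancel_left' binomial_symmetric le_add1 add.commute)
    finally have "((-(real r + 1)) gchoose n) = (-1)^n * real ((n+r) choose r)" .
    moreover have "(-s)^n = (-1)^n * s^n" by (rule power_minus)
    ultimately show ?thesis by (simp add: mult_ac flip: power_mult_distrib)
  qed
  moreover have "(1 + -s) powr (-(real r + 1)) = 1 / (1 - s)^(r+1)"
  proof -
    have "(1 - s) powr (real r + 1) = (1 - s)^(r+1)"
      using assms by (subst powr_realpow[symmetric]) (auto simp: add.commute)
    moreover have "(1 - s) powr (-(real r + 1)) = 1 / (1 - s) powr (real r + 1)"
      by (rule powr_minus_divide)
    ultimately show ?thesis by simp
  qed
  ultimately show "(\<lambda>n. real ((n+r) choose r) * s^n) sums (1 / (1 - s)^(r+1))" by simp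
qed (use assms in auto)

lemma term_id:
  assumes "k \<le> l" "k \<le> m"
  shows "real ((2*k) choose k) * real ((l+m) choose (2*k)) * real ((l+m-2*k) choose (l-k))
       = real ((l+m) choose l) * real (l choose k) * real (m choose k)"
proof -
  have e1: "l+m-2*k-(l-k) = m-k" "2*k-k = k" "l+m-l = m" "l + m - (2*k + (l-k)) = m - k" using assms by auto
  have "2*k \<le> l+m" "l - k \<le> l+m-2*k" using assms by auto
  then have "real ((2*k) choose k) * real ((l+m) choose (2*k)) * real ((l+m-2*k) choose (l-k))
      = fact (2*k) / (fact k * fact k) * (fact (l+m) / (fact (2*k) * fact (l+m-2*k)))
        * (fact (l+m-2*k) / (fact (l-k) * fact (m-k)))"
    by (simp add: binomial_fact e1)
  also have "\<dots> = fact (l+m) / (fact k * fact k * fact (l-k) * fact (m-k))"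
    by (simp add: field_simps)
  also have "\<dots> = (fact (l+m) / (fact l * fact m)) * (fact l / (fact k * fact (l-k))) * (fact m / (fact k * fact (m-k)))"
    by (simp add: field_simps)
  also have "\<dots> = real ((l+m) choose l) * real (l choose k) * real (m choose k)"
    using assms by (simp add: binomial_fact e1)
  finally show ?thesis .
qed

lemma sum_id:
  "(\<Sum>k\<le>min l m. real ((2*k) choose k) * real ((l+m) choose (2*k)) * real ((l+m-2*k) choose (l-k)))
     = real (cb l m)"
proof -
  have "(\<Sum>k\<le>min l m. real ((2*k) choose k) * real ((l+m) choose (2*k)) * real ((l+m-2*k) choose (l-k)))
      = (\<Sum>k\<le>min l m. real ((l+m) choose l) * (real (l choose k) * real (m choose k)))"
    by (intro sum.cong refl) (simp add: term_id)
  also have "\<dots> = real ((l+m) choose l) * (\<Sum>k\<le>min l m. real (l choose k) * real (m choose k))"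
    by (simp add: sum_distrib_left)
  also have "(\<Sum>k\<le>min l m. real (l choose k) * real (m choose k)) = (\<Sum>k\<le>m. real (l choose k) * real (m choose k))"
    by (intro sum.mono_neutral_left) auto
  also have "\<dots> = (\<Sum>k\<le>m. real (l choose k) * real (m choose (m - k)))"
    by (intro sum.cong refl) (simp add: binomial_symmetric[symmetric])
  also have "\<dots> = real ((l+m) choose m)"
    using vandermonde[of l m m] by (simp flip: of_nat_mult of_nat_sum)
  also have "(l+m) choose m = (l+m) choose l"
    by (metis add_diff_cancel_left' binomial_symmetric le_add1)
  finally show ?thesis by (simp add: cb_def power2_eq_square)
qed

lemma inner_series:
  fixes x y :: real assumes xy: "0 \<le> x" "0 \<le> y" "x + y < 1"
  shows "((\<lambda>(a,b). real ((a+b+2*k) choose (2*k)) * real ((a+b) choose a) * x^a * y^b)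
           has_sum 1 / (1-(x+y))^(2*k+1)) UNIV"
proof -
  define f where "f = (\<lambda>(n,a). real ((n+2*k) choose (2*k)) * real (n choose a) * x^a * y^(n-a))"
  have "(f has_sum 1 / (1-(x+y))^(2*k+1)) (Sigma UNIV (\<lambda>n. {..n}))"
  proof (rule nn_fubini[where g="\<lambda>n. real ((n+2*k) choose (2*k)) * (x+y)^n"])
    fix n :: nat
    have "(x+y)^n = (\<Sum>a\<le>n. real (n choose a) * x^a * y^(n-a))" by (rule binomial_ring)
    then show "((\<lambda>a. f (n,a)) has_sum real ((n+2*k) choose (2*k)) * (x+y)^n) {..n}"
      by (intro has_sum_finiteI) (simp_all add: f_def sum_distrib_left mult_ac)
  next
    show "((\<lambda>n. real ((n+2*k) choose (2*k)) * (x+y)^n) has_sum 1 / (1-(x+y))^(2*k+1)) UNIV"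
      using negbin_series[of "x+y" "2*k"] xy by simp
  next
    fix n a show "0 \<le> f (n,a)" using xy by (simp add: f_def)
  qed
  then show ?thesis
    by (subst has_sum_reindex_bij_witness[where j = "\<lambda>(a,b). (a+b,a)" and i = "\<lambda>(n,a). (a,n-a)"
          and T = "Sigma UNIV (\<lambda>n. {..n})" and h = f and s' = "1 / (1-(x+y))^(2*k+1)"])
       (auto simp: f_def)
qed

lemma sqrt_factor:
  fixes s q :: real assumes "s < 1" "q < (1-s)^2"
  shows "(1-s) * sqrt (1 - 4 * (q/4 / (1-s)^2)) = sqrt ((1-s)^2 - q)"
proof -
  have "(1-s)^2 - q = (1-s)^2 * (1 - 4 * (q/4 / (1-s)^2))" using assms by (simp add: field_simps)
  then have "sqrt ((1-s)^2 - q) = sqrt ((1-s)^2) * sqrt (1 - 4 * (q/4 / (1-s)^2))"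
    by (simp add: real_sqrt_mult)
  then show ?thesis using assms by simp
qed

lemma G_series:
  fixes x y :: real assumes xy: "0 \<le> x" "0 \<le> y" "x + y < 1" "4*x*y < (1-(x+y))^2"
  shows "((\<lambda>(l,m). real (cb l m) * x^l * y^m) has_sum 1 / sqrt ((1-(x+y))^2 - 4*x*y)) UNIV"
proof -
  define s where "s = x + y"
  define D where "D = sqrt ((1-s)^2 - 4*x*y)"
  define t where "t = x*y / (1-s)^2"
  define I where "I k = (\<lambda>(a::nat,b::nat). real ((a+b+2*k) choose (2*k)) * real ((a+b) choose a) * x^a * y^b)" for k
  define c where "c = (\<lambda>k. real ((2*k) choose k) * (x*y)^k)"
  define T where "T = (\<lambda>(k,p). c k * I k p)"
  have s1: "s < 1" using xy by (simp add: s_def)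
  have t: "0 \<le> t" "t < 1/4" using xy s1 by (auto simp: t_def s_def field_simps)
  have "(T has_sum 1/D) (Sigma UNIV (\<lambda>_. UNIV))"
  proof (rule nn_fubini[where g = "\<lambda>k. c k * (1 / (1-s)^(2*k+1))"])
    fix k :: nat
    show "((\<lambda>p. T (k,p)) has_sum c k * (1 / (1-s)^(2*k+1))) UNIV"
      unfolding T_def using has_sum_cmult_right[OF inner_series[OF xy(1-3), of k], of "c k"]
      by (simp add: I_def s_def)
  next
    have "((\<lambda>k. (1/(1-s)) * (real ((2*k) choose k) * t^k)) has_sum (1/(1-s)) * (1 / sqrt (1 - 4*t))) UNIV"
      by (rule has_sum_cmult_right[OF central_series[OF t]])
    moreover have "(1/(1-s)) * (1 / sqrt (1 - 4*t)) = 1/D"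
    proof -
      have "(1-s) * sqrt (1 - 4 * (4*x*y/4 / (1-s)^2)) = sqrt ((1-s)^2 - 4*x*y)"
        by (rule sqrt_factor) (use s1 xy in \<open>auto simp: s_def\<close>)
      then show ?thesis by (simp add: D_def t_def)
    qed
    moreover have "(1/(1-s)) * (real ((2*k) choose k) * t^k) = c k * (1 / (1-s)^(2*k+1))" for k
      by (simp add: c_def t_def power_divide power_mult_distrib field_simps flip: power_mult)
    ultimately show "((\<lambda>k. c k * (1 / (1-s)^(2*k+1))) has_sum 1/D) UNIV" by simp
  next
    fix k p show "0 \<le> T (k,p)" using xy by (auto simp: T_def I_def c_def case_prod_unfold)
  qed
  then have T1: "(T has_sum 1/D) UNIV" by simp
  define h where "h = (\<lambda>((l::nat,m::nat),k::nat). T (k,(l-k,m-k)))"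
  have "(h has_sum 1/D) (Sigma UNIV (\<lambda>(l,m). {..min l m}))"
    by (subst has_sum_reindex_bij_witness[where j = "\<lambda>((l,m),k). (k,(l-k,m-k))"
          and i = "\<lambda>(k,(a,b)). ((a+k,b+k),k)" and T = UNIV and h = T and s' = "1/D"])
       (auto simp: h_def T1)
  from has_sum_Sigma'[OF this]
  have "((\<lambda>(l,m). \<Sum>k\<le>min l m. h ((l,m),k)) has_sum 1/D) UNIV"
    by (auto simp: case_prod_unfold intro!: has_sum_finiteI)
  moreover have "1/D = 1 / sqrt ((1-(x+y))^2 - 4*x*y)" by (simp add: D_def s_def)
  ultimately have "((\<lambda>(l,m). \<Sum>k\<le>min l m. h ((l,m),k)) has_sum 1 / sqrt ((1-(x+y))^2 - 4*x*y)) UNIV"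
    by simp
  then show ?thesis
  proof (rule has_sum_cong[THEN iffD1, rotated])
    fix p :: "nat \<times> nat"
    obtain l m where p: "p = (l,m)" by fastforce
    have "h ((l,m),k) = real ((2*k) choose k) * real ((l+m) choose (2*k)) * real ((l+m-2*k) choose (l-k)) * (x^l * y^m)"
      if "k \<le> min l m" for k
    proof -
      have e: "l-k+(m-k)+2*k = l+m" "l-k+(m-k) = l+m-2*k" "l+m-2*k+2*k = l+m" using that by auto
      have "x^l = x^k * x^(l-k)" "y^m = y^k * y^(m-k)" using that by (simp_all flip: power_add)
      then have "(x*y)^k * x^(l-k) * y^(m-k) = x^l * y^m"
        by (simp add: power_mult_distrib mult_ac)
      have "h ((l,m),k) = real ((2*k) choose k) * (x*y)^k * (real ((l-k+(m-k)+2*k) choose (2*k)) * real ((l-k+(m-k)) choose (l-k)) * x^(l-k) * y^(m-k))"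
        by (simp add: h_def T_def c_def I_def)
      also have "\<dots> = real ((2*k) choose k) * (x*y)^k * (real ((l+m) choose (2*k)) * real ((l+m-2*k) choose (l-k)) * x^(l-k) * y^(m-k))"
        by (simp only: e)
      also have "\<dots> = real ((2*k) choose k) * real ((l+m) choose (2*k)) * real ((l+m-2*k) choose (l-k)) * ((x*y)^k * x^(l-k) * y^(m-k))"
        by (simp only: mult_ac)
      finally show ?thesis using \<open>(x*y)^k * x^(l-k) * y^(m-k) = x^l * y^m\<close> by simp
    qed
    then have "(\<Sum>k\<le>min l m. h ((l,m),k)) = (\<Sum>k\<le>min l m. real ((2*k) choose k) * real ((l+m) choose (2*k)) * real ((l+m-2*k) choose (l-k))) * (x^l * y^m)"
      by (simp add: sum_distrib_right)
    also have "\<dots> = real (cb l m) * x^l * y^m" by (simp add: sum_id)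
    finally show "(\<lambda>(l,m). \<Sum>k\<le>min l m. h ((l,m),k)) p = (\<lambda>(l,m). real (cb l m) * x^l * y^m) p"
      by (simp add: p)
  qed
qed

lemma K_series:
  fixes x y :: real assumes xy: "0 \<le> x" "0 \<le> y" "x + y < 1" "4*x*y < (1-(x+y))^2"
  shows "((\<lambda>(L,M). real (K L M j) * x^L * y^M) has_sum (1 / sqrt ((1-(x+y))^2 - 4*x*y))^(Suc j)) UNIV"
proof (induction j)
  case 0
  then show ?case using G_series[OF xy] by (simp add: K_0)
next
  case (Suc j)
  have "((\<lambda>(L,M). (\<Sum>L1\<le>L. \<Sum>M1\<le>M. real (K L1 M1 j) * real (cb (L-L1) (M-M1))) * x^L * y^M) has_sum
      (1 / sqrt ((1-(x+y))^2 - 4*x*y))^(Suc j) * (1 / sqrt ((1-(x+y))^2 - 4*x*y))) UNIV"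
    by (rule conv2[OF Suc G_series[OF xy]]) (use xy in auto)
  moreover have "real (K L M (Suc j)) = (\<Sum>L1\<le>L. \<Sum>M1\<le>M. real (K L1 M1 j) * real (cb (L-L1) (M-M1)))" for L M
    by (simp add: K_Suc)
  ultimately show ?case by (simp add: mult_ac)
qed

theorem mainTheorem3:
  fixes w x y :: real
  assumes "0 \<le> x" "x < 1/4" "0 \<le> y" "y < 1/4" "0 \<le> w"
    and "w < sqrt ((1 - (x + y))^2 - 4*x*y)"
  shows "((\<lambda>(j, L, M). w^j * x^L * y^M * real (K L M j)) has_sum
           (1 / (sqrt ((1 - (x + y))^2 - 4*x*y) - w))) (UNIV :: (nat \<times> nat \<times> nat) set)"
proof -
  define D where "D = sqrt ((1 - (x + y))^2 - 4*x*y)"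
  have wD: "w < D" "0 \<le> w" using assms by (auto simp: D_def)
  then have D0: "D > 0" by simp
  then have "(1 - (x + y))^2 - 4*x*y > 0" unfolding D_def by simp
  then have xy: "0 \<le> x" "0 \<le> y" "x + y < 1" "4*x*y < (1-(x+y))^2" using assms by auto
  have "((\<lambda>(j, L, M). w^j * x^L * y^M * real (K L M j)) has_sum (1 / (D - w))) (Sigma UNIV (\<lambda>_. UNIV))"
  proof (rule nn_fubini[where g = "\<lambda>j. w^j * (1/D)^(Suc j)"])
    fix j :: nat
    have "((\<lambda>p. w^j * (\<lambda>(L,M). real (K L M j) * x^L * y^M) p) has_sum w^j * (1/D)^(Suc j)) UNIV"
      by (rule has_sum_cmult_right) (use K_series[OF xy, of j] in \<open>simp add: D_def\<close>)
    then show "((\<lambda>p. (\<lambda>(j, L, M). w^j * x^L * y^M * real (K L M j)) (j, p)) has_sum w^j * (1/D)^(Suc j)) UNIV"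
      by (simp add: case_prod_unfold mult_ac)
  next
    have n: "norm (w/D) < 1" using wD D0 by simp
    have H: "((\<lambda>j. (1/D) * (w/D)^j) has_sum (1/D) * (1 / (1 - w/D))) UNIV"
      by (rule has_sum_cmult_right, rule sums_nonneg_imp_has_sum[OF geometric_sums[OF n]])
         (use wD D0 in auto)
    have e1: "(1/D) * (1 / (1 - w/D)) = 1 / (D - w)" using D0 wD by (simp add: field_simps)
    have e2: "(\<lambda>j. (1/D) * (w/D)^j) = (\<lambda>j. w^j * (1/D)^(Suc j))"
      by (rule ext) (simp add: power_divide)
    from H show "((\<lambda>j. w^j * (1/D)^(Suc j)) has_sum 1 / (D - w)) UNIV" by (simp only: e1 e2)
  next
    fix j p show "0 \<le> (\<lambda>(j, L, M). w^j * x^L * y^M * real (K L M j)) (j, p)"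
      using xy wD by (auto simp: case_prod_unfold)
  qed
  then show ?thesis by (simp add: D_def)
qed

end
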